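(* Let $\mathcal{G}=\langle S,A,T,s_0,F\rangle$ be a two-player turn-based deterministic reachability game and let $X,Y\subseteq\mathrm{Win}_2(\mathcal{G},F)\setminus F$ with $X\cap Y=\emptyset$. Let $s\in\mathrm{Win}_2(\mathcal{G},F)$ and let $\pi_1$ be a memoryless deterministic P1 strategy in the hypergame on graph $\widehat{\mathcal{H}}_1(X,Y)$ that is sure winning for P1 (for reaching $X\cup Y$) from $s$. Then $\pi_1$ (extended arbitrarily to P1 states outside $\mathrm{Win}_2(\mathcal{G},F)$) is a stealthy deceptive sure winning strategy for P1 at $s$.
   Context: A two-player turn-based deterministic reachability game is a tuple $\mathcal{G}=\langle S,A,T,s_0,F\rangle$: $S$ finite, partitioned into P1 states $S_1$ and P2 states $S_2$; $A=A_1\cup A_2$ (P1 and P2 actions); $T:(S_1\times A_1)\cup(S_2\times A_2)\to S$ deterministic, possibly partial ($a$ enabled at $s$ iff $T(s,a)$ defined; every state has an enabled action); $s_0$ initial; $F\subseteq S$ a set of sink states (P2's goal). For a target $R\subseteq S$: $Z_0=R$, $Z_{k+1}=Z_k\cup\{s\in S_1:T(s,a)\in Z_k\ \forall\text{ enabled }a\}\cup\{s\in S_2:T(s,a)\in Z_k\text{ for some enabled }a\}$; $\mathrm{Win}_2(\mathcal{G},R)=\bigcup_kZ_k$; $\mathrm{rank}_{\mathcal{G},R}(s)=\min\{k:s\in Z_k\}$ ($\infty$ if none). For disjoint traps $X$ and fake targets $Y$: the true game $\mathcal{G}^1_{X,Y}$ has states $S$, transitions $T_{X,Y}(q,a)=T(q,a)$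 if $q\notin X\cup Y$ and $T_{X,Y}(q,a)=q$ if $q\in X\cup Y$, goal $F$; P2's perceptual game $\mathcal{G}^2_{X,Y}$ has transitions $T$ and goal $F\cup Y$, with ranks $\mathrm{rank}_{\mathcal{G}^2_{X,Y}}:=\mathrm{rank}_{\mathcal{G},F\cup Y}$. Subjectively rationalizable (sure-winning, greedy) actions: for $q\in S_2\cap\mathrm{Win}_2(\mathcal{G},F)\setminus(F\cup Y)$, $\mathsf{SRActs}_{X,Y}(q)=\{a\text{ enabled at }q:\mathrm{rank}_{\mathcal{G}^2_{X,Y}}(T(q,a))<\mathrm{rank}_{\mathcal{G}^2_{X,Y}}(q)\}$; at every other state, all enabled actions. A memoryless deterministic strategy $\pi$ of either player (a map from that player's states to enabled actions) is subjectively rationalizable if $\pi(q)\in\mathsf{SRActs}_{X,Y}(q)$ at all of that player's states. Given strategies $\pi_1,\pi_2$ and a state $s$, $\mathsf{Outcomes}(s,\pi_1,\pi_2)$ in a game is the set of paths from $s$ generated by following the strategies. A memoryless deterministic P1 strategy $\pi_1$ is stealthy deceptive sure winning at $s$ if it is subjectively rationalizable and, for every subjectively rationalizable memoryless deterministic P2 strategy $\pi_2$, every path in $\mathsf{Outcomes}(s,\pi_1,\pi_2)$ in the true game $\mathcal{G}^1_{X,Y}$ visits $X\cup Y$ within finitely many steps. The hypergame on graph $\widehat{\mathcal{H}}_1(X,Y)=\langle\mathrm{Win}_2(\mathcal{G},F),A,\widehat T_{X,Y},s_0,X\cup Y\rangle$ is the turn-based game with state set $\mathrm{Win}_2(\mathcal{G},F)$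 (inheriting the P1/P2 partition), $\widehat T_{X,Y}(q,a)=T(q,a)$ if $a\in\mathsf{SRActs}_{X,Y}(q)$ and undefined otherwise, in which P1 aims to reach $X\cup Y$ and P2 aims to avoid it; a P1 strategy is sure winning from $s$ in it if, for every P2 strategy in $\widehat{\mathcal{H}}_1(X,Y)$, every resulting path from $s$ visits $X\cup Y$ within finitely many steps. *)

theory Defs
  imports Main "HOL-Library.Extended_Nat"
begin

text \<open>States S (finite), P1 states S1 \<subseteq> S,
  P2 states S - S1.  The partial deterministic transition function is
  T :: state \<Rightarrow> action \<Rightarrow> state option; an action a is enabled at q
  iff T q a \<noteq> None.  F is a set of sink states (P2's goal).\<close>

definition game ::
  "'s set \<Rightarrow> 's set \<Rightarrow> 'a set \<Rightarrow> 'a set \<Rightarrow> ('s \<Rightarrow> 'a \<Rightarrow> 's option) \<Rightarrow> 's \<Rightarrow> 's set \<Rightarrow> bool" where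
  "game S S1 A1 A2 T s0 F \<longleftrightarrow>
     finite S \<and> S1 \<subseteq> S \<and> s0 \<in> S \<and> F \<subseteq> S \<and>
     (\<forall>q a t. T q a = Some t \<longrightarrow>
        q \<in> S \<and> t \<in> S \<and> (q \<in> S1 \<longrightarrow> a \<in> A1) \<and> (q \<in> S - S1 \<longrightarrow> a \<in> A2)) \<and>
     (\<forall>q\<in>S. \<exists>a. T q a \<noteq> None) \<and>
     (\<forall>q\<in>F. \<forall>a t. T q a = Some t \<longrightarrow> t = q)"

primrec Zset ::
  "'s set \<Rightarrow> 's set \<Rightarrow> ('s \<Rightarrow> 'a \<Rightarrow> 's option) \<Rightarrow> 's set \<Rightarrow> nat \<Rightarrow> 's set" where
  "Zset S S1 T R 0 = R"
| "Zset S S1 T R (Suc k) =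
     Zset S S1 T R k
     \<union> {q \<in> S1. \<forall>a t. T q a = Some t \<longrightarrow> t \<in> Zset S S1 T R k}
     \<union> {q \<in> S - S1. \<exists>a t. T q a = Some t \<and> t \<in> Zset S S1 T R k}"

definition Win2 :: "'s set \<Rightarrow> 's set \<Rightarrow> ('s \<Rightarrow> 'a \<Rightarrow> 's option) \<Rightarrow> 's set \<Rightarrow> 's set" where
  "Win2 S S1 T R = (\<Union>k. Zset S S1 T R k)"

definition rank :: "'s set \<Rightarrow> 's set \<Rightarrow> ('s \<Rightarrow> 'a \<Rightarrow> 's option) \<Rightarrow> 's set \<Rightarrow> 's \<Rightarrow> enat" where
  "rank S S1 T R q =
     (if \<exists>k. q \<in> Zset S S1 T R k then enat (LEAST k. q \<in> Zset S S1 T R k) else \<infinity>)"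

text \<open>Subjectively rationalizable actions; ranks are those of P2's perceptual
  game, i.e. ranks in G towards F \<union> Y.\<close>
definition SRActs ::
  "'s set \<Rightarrow> 's set \<Rightarrow> ('s \<Rightarrow> 'a \<Rightarrow> 's option) \<Rightarrow> 's set \<Rightarrow> 's set \<Rightarrow> 's set \<Rightarrow> 's \<Rightarrow> 'a set" where
  "SRActs S S1 T F X Y q =
     (if q \<in> ((S - S1) \<inter> Win2 S S1 T F) - (F \<union> Y)
      then {a. \<exists>t. T q a = Some t \<and> rank S S1 T (F \<union> Y) t < rank S S1 T (F \<union> Y) q}
      else {a. T q a \<noteq> None})"

definition Ttrue ::
  "('s \<Rightarrow> 'a \<Rightarrow> 's option) \<Rightarrow> 's set \<Rightarrow> 's set \<Rightarrow> 's \<Rightarrow> 'a \<Rightarrow> 's option" where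
  "Ttrue T X Y q a = (if q \<in> X \<union> Y then (if T q a \<noteq> None then Some q else None) else T q a)"

definition Outcomes_true ::
  "'s set \<Rightarrow> ('s \<Rightarrow> 'a \<Rightarrow> 's option) \<Rightarrow> 's set \<Rightarrow> 's set \<Rightarrow> 's \<Rightarrow> ('s \<Rightarrow> 'a) \<Rightarrow> ('s \<Rightarrow> 'a) \<Rightarrow> (nat \<Rightarrow> 's) set" where
  "Outcomes_true S1 T X Y s pi1 pi2 =
     {\<rho>. \<rho> 0 = s \<and>
          (\<forall>n. Ttrue T X Y (\<rho> n) (if \<rho> n \<in> S1 then pi1 (\<rho> n) else pi2 (\<rho> n)) = Some (\<rho> (Suc n)))}"

definition P1_strategy :: "'s set \<Rightarrow> ('s \<Rightarrow> 'a \<Rightarrow> 's option) \<Rightarrow> ('s \<Rightarrow> 'a) \<Rightarrow> bool" where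
  "P1_strategy S1 T pi1 \<longleftrightarrow> (\<forall>q\<in>S1. T q (pi1 q) \<noteq> None)"

definition P2_strategy :: "'s set \<Rightarrow> 's set \<Rightarrow> ('s \<Rightarrow> 'a \<Rightarrow> 's option) \<Rightarrow> ('s \<Rightarrow> 'a) \<Rightarrow> bool" where
  "P2_strategy S S1 T pi2 \<longleftrightarrow> (\<forall>q\<in>S - S1. T q (pi2 q) \<noteq> None)"

definition SR_P1 ::
  "'s set \<Rightarrow> 's set \<Rightarrow> ('s \<Rightarrow> 'a \<Rightarrow> 's option) \<Rightarrow> 's set \<Rightarrow> 's set \<Rightarrow> 's set \<Rightarrow> ('s \<Rightarrow> 'a) \<Rightarrow> bool" where
  "SR_P1 S S1 T F X Y pi1 \<longleftrightarrow>
     P1_strategy S1 T pi1 \<and> (\<forall>q\<in>S1. pi1 q \<in> SRActs S S1 T F X Y q)"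

definition SR_P2 ::
  "'s set \<Rightarrow> 's set \<Rightarrow> ('s \<Rightarrow> 'a \<Rightarrow> 's option) \<Rightarrow> 's set \<Rightarrow> 's set \<Rightarrow> 's set \<Rightarrow> ('s \<Rightarrow> 'a) \<Rightarrow> bool" where
  "SR_P2 S S1 T F X Y pi2 \<longleftrightarrow>
     P2_strategy S S1 T pi2 \<and> (\<forall>q\<in>S - S1. pi2 q \<in> SRActs S S1 T F X Y q)"

definition stealthy_deceptive_sure_winning ::
  "'s set \<Rightarrow> 's set \<Rightarrow> ('s \<Rightarrow> 'a \<Rightarrow> 's option) \<Rightarrow> 's set \<Rightarrow> 's set \<Rightarrow> 's set \<Rightarrow> ('s \<Rightarrow> 'a) \<Rightarrow> 's \<Rightarrow> bool" where
  "stealthy_deceptive_sure_winning S S1 T F X Y pi1 s \<longleftrightarrow>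
     SR_P1 S S1 T F X Y pi1 \<and>
     (\<forall>pi2. SR_P2 S S1 T F X Y pi2 \<longrightarrow>
        (\<forall>\<rho>\<in>Outcomes_true S1 T X Y s pi1 pi2. \<exists>n. \<rho> n \<in> X \<union> Y))"

text \<open>Hypergame on graph H1(X,Y): state set Win2(G,F), transition T(q,a) allowed iff
  a \<in> SRActs(q).  A play from s consistent with the P1 strategy pi1 is an infinite
  sequence of hypergame states in which P1 follows pi1 and P2 picks any allowed
  action (this covers every, possibly history-dependent, P2 strategy).
  pi1 is sure winning from s iff every such play visits X \<union> Y.\<close>
definition hyper_play ::
  "'s set \<Rightarrow> 's set \<Rightarrow> ('s \<Rightarrow> 'a \<Rightarrow> 's option) \<Rightarrow> 's set \<Rightarrow> 's set \<Rightarrow> 's set \<Rightarrow> ('s \<Rightarrow> 'a) \<Rightarrow> 's \<Rightarrow> (nat \<Rightarrow> 's) \<Rightarrow> bool" where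
  "hyper_play S S1 T F X Y pi1 s \<rho> \<longleftrightarrow>
     \<rho> 0 = s \<and>
     (\<forall>n. \<rho> n \<in> Win2 S S1 T F) \<and>
     (\<forall>n. \<exists>a. a \<in> SRActs S S1 T F X Y (\<rho> n) \<and> T (\<rho> n) a = Some (\<rho> (Suc n)) \<and>
               (\<rho> n \<in> S1 \<longrightarrow> a = pi1 (\<rho> n)))"

definition hyper_sure_winning ::
  "'s set \<Rightarrow> 's set \<Rightarrow> ('s \<Rightarrow> 'a \<Rightarrow> 's option) \<Rightarrow> 's set \<Rightarrow> 's set \<Rightarrow> 's set \<Rightarrow> ('s \<Rightarrow> 'a) \<Rightarrow> 's \<Rightarrow> bool" where
  "hyper_sure_winning S S1 T F X Y pi1 s \<longleftrightarrow>
     (\<forall>q\<in>S1 \<inter> Win2 S S1 T F. pi1 q \<in> SRActs S S1 T F X Y q) \<and>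
     (\<forall>\<rho>. hyper_play S S1 T F X Y pi1 s \<rho> \<longrightarrow> (\<exists>n. \<rho> n \<in> X \<union> Y))"

end

theory Submission
  imports Defs
begin

lemma Zset_mono_add: "Zset S S1 T R k \<subseteq> Zset S S1 T R (k + m)"
  by (induction m) auto

lemma Zset_mono: "k \<le> K \<Longrightarrow> Zset S S1 T R k \<subseteq> Zset S S1 T R K"
  using Zset_mono_add[of S S1 T R k "K - k"] by simp

lemma Zset_sub: "R \<subseteq> S \<Longrightarrow> S1 \<subseteq> S \<Longrightarrow> Zset S S1 T R k \<subseteq> S"
  by (induction k) auto

lemma finite_in_Z:
  assumes "finite A" "A \<subseteq> Win2 S S1 T R"
  shows "\<exists>K. A \<subseteq> Zset S S1 T R K"
  using assms
proof (induction A rule: finite_induct)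
  case empty then show ?case by auto
next
  case (insert x A)
  then obtain K where K: "A \<subseteq> Zset S S1 T R K" by auto
  from insert obtain k where k: "x \<in> Zset S S1 T R k" unfolding Win2_def by auto
  have "A \<subseteq> Zset S S1 T R (max K k)" using K Zset_mono[OF max.cobounded1] by (rule order_trans)
  moreover have "x \<in> Zset S S1 T R (max K k)" using k Zset_mono[OF max.cobounded2] by (rule subsetD[rotated])
  ultimately show ?case by blast
qed

lemma Win2_union:
  assumes g: "game S S1 A1 A2 T s0 F" and Y: "Y \<subseteq> Win2 S S1 T F"
  shows "Win2 S S1 T (F \<union> Y) \<subseteq> Win2 S S1 T F"
proof -
  have fin: "finite S" and tS: "\<And>q a t. T q a = Some t \<Longrightarrow> t \<in> S"
    using g unfolding game_def by auto
  have "Zset S S1 T (F \<union> Y) k \<subseteq> Win2 S S1 T F" for k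
  proof (induction k)
    case 0
    have "F \<subseteq> Win2 S S1 T F" unfolding Win2_def
      by (metis Zset.simps(1) UN_upper UNIV_I)
    then show ?case using Y by simp
  next
    case (Suc k)
    show ?case
    proof
      fix q assume q: "q \<in> Zset S S1 T (F \<union> Y) (Suc k)"
      let ?A = "{t. \<exists>a. T q a = Some t}"
      consider "q \<in> Zset S S1 T (F \<union> Y) k"
        | "q \<in> S1" "\<forall>a t. T q a = Some t \<longrightarrow> t \<in> Zset S S1 T (F \<union> Y) k"
        | "q \<in> S - S1" "\<exists>a t. T q a = Some t \<and> t \<in> Zset S S1 T (F \<union> Y) k"
        using q by auto
      then show "q \<in> Win2 S S1 T F"
      proof cases
        case 1 then show ?thesis using Suc by auto
      next
        case 2
        have "?A \<subseteq> S" using tS by auto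
        then have "finite ?A" using fin finite_subset by blast
        moreover have "?A \<subseteq> Win2 S S1 T F" using 2 Suc by auto
        ultimately obtain K where "?A \<subseteq> Zset S S1 T F K" using finite_in_Z by blast
        then have "q \<in> Zset S S1 T F (Suc K)" using 2 by auto
        then show ?thesis unfolding Win2_def by blast
      next
        case 3
        then obtain a t where "T q a = Some t" "t \<in> Win2 S S1 T F" using Suc by blast
        moreover then obtain K where "t \<in> Zset S S1 T F K" unfolding Win2_def by auto
        ultimately have "q \<in> Zset S S1 T F (Suc K)" using 3 by auto
        then show ?thesis unfolding Win2_def by blast
      qed
    qed
  qed
  then show ?thesis unfolding Win2_def by blast
qed

lemma Win2_P1_closed:
  assumes g: "game S S1 A1 A2 T s0 F"
    and "q \<in> Zset S S1 T F k" "q \<in> S1" "T q a = Some t"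
  shows "t \<in> Win2 S S1 T F"
  using assms(2-4)
proof (induction k)
  case 0
  then have "t = q" using g unfolding game_def by auto
  then show ?case using 0 unfolding Win2_def by (metis UN_I UNIV_I)
next
  case (Suc k)
  show ?case
  proof (cases "q \<in> Zset S S1 T F k")
    case True then show ?thesis using Suc by blast
  next
    case False
    then have "t \<in> Zset S S1 T F k" using Suc.prems by auto
    then show ?thesis unfolding Win2_def by blast
  qed
qed

lemma rank_lt_win:
  assumes "rank S S1 T R t < rank S S1 T R q"
  shows "t \<in> Win2 S S1 T R"
  using assms unfolding rank_def Win2_def by (auto split: if_splits)

theorem theorem1:
  fixes S S1 :: "'s set" and A1 A2 :: "'a set"
    and T :: "'s \<Rightarrow> 'a \<Rightarrow> 's option" and s0 s :: 's and F X Y :: "'s set"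
    and pi1 :: "'s \<Rightarrow> 'a"
  assumes "game S S1 A1 A2 T s0 F"
    and "X \<subseteq> Win2 S S1 T F - F" and "Y \<subseteq> Win2 S S1 T F - F" and "X \<inter> Y = {}"
    and "s \<in> Win2 S S1 T F"
    and "P1_strategy S1 T pi1"
    and "hyper_sure_winning S S1 T F X Y pi1 s"
  shows "stealthy_deceptive_sure_winning S S1 T F X Y pi1 s"
proof -
  note g = assms(1)
  have FS: "F \<subseteq> S" and S1S: "S1 \<subseteq> S" using g unfolding game_def by auto
  have sink: "\<And>q a t. q \<in> F \<Longrightarrow> T q a = Some t \<Longrightarrow> t = q" using g unfolding game_def by auto
  have WS: "Win2 S S1 T F \<subseteq> S" unfolding Win2_def using Zset_sub[OF FS S1S] by blast
  have WU: "Win2 S S1 T (F \<union> Y) \<subseteq> Win2 S S1 T F"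
    using Win2_union[OF g] assms(3) by blast
  have SR1: "SR_P1 S S1 T F X Y pi1"
    using assms(6) unfolding SR_P1_def P1_strategy_def SRActs_def by auto
  have main: "\<exists>n. \<rho> n \<in> X \<union> Y"
    if SR2: "SR_P2 S S1 T F X Y pi2" and rho: "\<rho> \<in> Outcomes_true S1 T X Y s pi1 pi2" for pi2 \<rho>
  proof (rule ccontr)
    assume nn: "\<not> (\<exists>n. \<rho> n \<in> X \<union> Y)"
    have step: "T (\<rho> n) (if \<rho> n \<in> S1 then pi1 (\<rho> n) else pi2 (\<rho> n)) = Some (\<rho> (Suc n))" for n
    proof -
      have "Ttrue T X Y (\<rho> n) (if \<rho> n \<in> S1 then pi1 (\<rho> n) else pi2 (\<rho> n)) = Some (\<rho> (Suc n))"
        using rho unfolding Outcomes_true_def by blast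
      moreover have "\<rho> n \<notin> X \<union> Y" using nn by blast
      ultimately show ?thesis unfolding Ttrue_def by simp
    qed
    have inv: "\<rho> n \<in> Win2 S S1 T F" for n
    proof (induction n)
      case 0 then show ?case using rho assms(5) unfolding Outcomes_true_def by auto
    next
      case (Suc n)
      show ?case
      proof (cases "\<rho> n \<in> S1")
        case True
        then have "T (\<rho> n) (pi1 (\<rho> n)) = Some (\<rho> (Suc n))" using step[of n] by simp
        moreover obtain k where "\<rho> n \<in> Zset S S1 T F k" using Suc unfolding Win2_def by auto
        ultimately show ?thesis using Win2_P1_closed[OF g] True by blast
      next
        case False
        then have T2: "T (\<rho> n) (pi2 (\<rho> n)) = Some (\<rho> (Suc n))" using step[of n] by simp
        have inS: "\<rho> n \<in> S - S1" using False Suc WS by auto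
        show ?thesis
        proof (cases "\<rho> n \<in> F")
          case True then have "\<rho> (Suc n) = \<rho> n" using sink T2 by blast
          then show ?thesis using Suc by simp
        next
          case notF: False
          have "\<rho> n \<notin> Y" using nn by auto
          then have "pi2 (\<rho> n) \<in> {a. \<exists>t. T (\<rho> n) a = Some t \<and> rank S S1 T (F \<union> Y) t < rank S S1 T (F \<union> Y) (\<rho> n)}"
          proof -
            have "pi2 (\<rho> n) \<in> SRActs S S1 T F X Y (\<rho> n)" using SR2 inS unfolding SR_P2_def by blast
            moreover have "\<rho> n \<in> ((S - S1) \<inter> Win2 S S1 T F) - (F \<union> Y)" using inS Suc notF \<open>\<rho> n \<notin> Y\<close> by blast
            ultimately show ?thesis unfolding SRActs_def by simp
          qed
          then have "rank S S1 T (F \<union> Y) (\<rho> (Suc n)) < rank S S1 T (F \<union> Y) (\<rho> n)"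
            using T2 by auto
          then show ?thesis using rank_lt_win WU by (meson subsetD)
        qed
      qed
    qed
    have "hyper_play S S1 T F X Y pi1 s \<rho>"
      unfolding hyper_play_def
    proof (intro conjI allI)
      show "\<rho> 0 = s" using rho unfolding Outcomes_true_def by auto
      show "\<rho> n \<in> Win2 S S1 T F" for n using inv .
      fix n
      show "\<exists>a. a \<in> SRActs S S1 T F X Y (\<rho> n) \<and> T (\<rho> n) a = Some (\<rho> (Suc n)) \<and>
               (\<rho> n \<in> S1 \<longrightarrow> a = pi1 (\<rho> n))"
      proof (cases "\<rho> n \<in> S1")
        case True
        then show ?thesis using step[of n] unfolding SRActs_def by auto
      next
        case False
        have "\<rho> n \<in> S - S1" using False inv WS by auto
        then have "pi2 (\<rho> n) \<in> SRActs S S1 T F X Y (\<rho> n)" using SR2 unfolding SR_P2_def by auto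
        then show ?thesis using step[of n] False by auto
      qed
    qed
    then show False using assms(7) nn unfolding hyper_sure_winning_def by blast
  qed
  show ?thesis unfolding stealthy_deceptive_sure_winning_def using SR1 main by blast
qed

end
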